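(* Let $N$ be a positive integer and let $\psi(x)=a_1x^k+\cdots+a_kx$ be a polynomial with integer coefficients with $|a_1|,\ldots,|a_k|\le\log N$. Then for any $\theta\in\mathbb{T}$, $$\sum_{x=1}^N\psi^{\Delta}(x-1)e(\theta\psi(x))=\sum_{x=1}^{\psi(N)}e(\theta x)+O\big(\theta\,\psi(N)\psi^{\Delta}(N)\big),$$ where the implied constant depends only on $k$.
   Context: $\mathbb{T}=\mathbb{R}/\mathbb{Z}$ (in the error term $\theta$ denotes a real representative), $e(x)=e^{2\pi\sqrt{-1}x}$, and for a function $f$ on $\mathbb{Z}$, $f^{\Delta}(x)=f(x+1)-f(x)$. *)

theory Defs
  imports "HOL-Analysis.Analysis"
begin

definition e :: "real \<Rightarrow> complex" where
  "e x = exp (2 * pi * \<i> * complex_of_real x)"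

definition fdiff :: "(int \<Rightarrow> int) \<Rightarrow> int \<Rightarrow> int" where
  "fdiff f x = f (x + 1) - f x"

definition psi_poly :: "nat \<Rightarrow> (nat \<Rightarrow> int) \<Rightarrow> int \<Rightarrow> int" where
  "psi_poly k a x = (\<Sum>i=1..k. a i * x ^ (k + 1 - i))"

text \<open>Sum from x = 1 to M, with the standard signed convention
  sum_{x=1}^M f x = - sum_{x=M+1}^0 f x when M < 0 (empty sum when M = 0).\<close>
definition sum_upto :: "(int \<Rightarrow> complex) \<Rightarrow> int \<Rightarrow> complex" where
  "sum_upto f M = (if 0 \<le> M then (\<Sum>x\<in>{1..M}. f x) else - (\<Sum>x\<in>{M+1..0}. f x))"

end

theory Submission
  imports Defs
begin

lemma cis_minus_one: "norm (cis t - 1) \<le> \<bar>t\<bar>"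
proof -
  have "(norm (cis t - 1))^2 = (cos t - 1)^2 + (sin t)^2"
    by (simp add: cmod_def cis.code)
  also have "\<dots> = 4 * (sin (t/2))^2"
    using cos_double_sin[of "t/2"] by (simp add: power2_eq_square algebra_simps sin_squared_eq)
  also have "\<dots> \<le> t^2"
  proof -
    have "\<bar>sin (t/2)\<bar> \<le> \<bar>t/2\<bar>" by (rule abs_sin_x_le_abs_x)
    hence "(sin (t/2))^2 \<le> (t/2)^2" by (metis abs_le_square_iff)
    thus ?thesis by (simp add: power_divide)
  qed
  finally have "(norm (cis t - 1))^2 \<le> \<bar>t\<bar>^2" by simp
  thus ?thesis by (rule power2_le_imp_le) simp
qed

lemma e_lip: "norm (e a - e b) \<le> 2*pi*\<bar>a - b\<bar>"
proof -
  have ea: "e x = cis (2*pi*x)" for x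
    by (simp add: e_def cis_conv_exp mult_ac)
  have "e a - e b = e b * (e (a - b) - 1)"
    by (simp add: ea cis_mult algebra_simps)
  hence "norm (e a - e b) = norm (cis (2*pi*(a-b)) - 1)"
    by (simp add: ea norm_mult)
  also have "\<dots> \<le> \<bar>2*pi*(a-b)\<bar>" by (rule cis_minus_one)
  finally show ?thesis by (simp add: abs_mult)
qed

lemma sum_upto_step: "sum_upto f (M+1) - sum_upto f M = f (M+1)"
proof (cases "0 \<le> M")
  case True
  have "{1..M+1} = insert (M+1) {1..M}" using True by auto
  hence "(\<Sum>x\<in>{1..M+1}. f x) = f (M+1) + (\<Sum>x\<in>{1..M}. f x)" by simp
  moreover have "sum_upto f (M+1) = (\<Sum>x\<in>{1..M+1}. f x)" using True by (simp add: sum_upto_def)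
  moreover have "sum_upto f M = (\<Sum>x\<in>{1..M}. f x)" using True by (simp add: sum_upto_def)
  ultimately show ?thesis by simp
next
  case False
  show ?thesis
  proof (cases "M = -1")
    case True thus ?thesis by (simp add: sum_upto_def)
  next
    case F2: False
    have "{M+1..0} = insert (M+1) {M+1+1..0}" using False F2 by auto
    hence "(\<Sum>x\<in>{M+1..0}. f x) = f (M+1) + (\<Sum>x\<in>{M+1+1..0}. f x)" by simp
    moreover have "sum_upto f (M+1) = - (\<Sum>x\<in>{M+1+1..0}. f x)" using False F2 by (simp add: sum_upto_def)
    moreover have "sum_upto f M = - (\<Sum>x\<in>{M+1..0}. f x)" using False by (simp add: sum_upto_def)
    ultimately show ?thesis by simp
  qed
qed

lemma sum_upto_block: "M \<le> M' \<Longrightarrow> sum_upto f M' - sum_upto f M = (\<Sum>y\<in>{M+1..M'}. f y)"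
proof (induction M' rule: int_ge_induct)
  case base thus ?case by simp
next
  case (step i)
  have "{M+1..i+1} = insert (i+1) {M+1..i}" using step by auto
  hence "(\<Sum>y\<in>{M+1..i+1}. f y) = f (i+1) + (\<Sum>y\<in>{M+1..i}. f y)" by simp
  moreover have "sum_upto f (i+1) = f (i+1) + sum_upto f i" using sum_upto_step[of f i] by (simp add: algebra_simps)
  ultimately show ?case using step by (simp add: algebra_simps)
qed

lemma block_gen:
  fixes g :: complex
  assumes "A \<le> B" "\<And>y. y \<in> {A+1..B} \<Longrightarrow> norm (g - f y) \<le> K"
  shows "norm (of_int (B - A) * g - (\<Sum>y\<in>{A+1..B}. f y)) \<le> real_of_int (B - A) * K"
proof -
  have c: "card {A+1..B} = nat (B - A)" by simp
  have "of_int (B - A) * g = (\<Sum>y\<in>{A+1..B}. g)" using assms(1) c by simp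
  hence "of_int (B - A) * g - (\<Sum>y\<in>{A+1..B}. f y) = (\<Sum>y\<in>{A+1..B}. g - f y)"
    by (simp add: sum_subtractf)
  hence "norm (of_int (B - A) * g - (\<Sum>y\<in>{A+1..B}. f y)) \<le> (\<Sum>y\<in>{A+1..B}. norm (g - f y))"
    by (simp add: norm_sum)
  also have "\<dots> \<le> (\<Sum>y\<in>{A+1..B}. K)" by (rule sum_mono) (use assms(2) in auto)
  also have "\<dots> = real_of_int (B - A) * K" using assms(1) c by simp
  finally show ?thesis .
qed

lemma block_err:
  fixes M M' :: int and \<theta> :: real
  shows "norm (of_int (M' - M) * e (\<theta> * of_int M') - (sum_upto (\<lambda>y. e (\<theta> * of_int y)) M' - sum_upto (\<lambda>y. e (\<theta> * of_int y)) M))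
     \<le> 2*pi*\<bar>\<theta>\<bar> * (real_of_int (M' - M))^2"
proof (cases "M \<le> M'")
  case True
  have "norm (of_int (M' - M) * e (\<theta> * of_int M') - (\<Sum>y\<in>{M+1..M'}. e (\<theta> * of_int y)))
     \<le> real_of_int (M' - M) * (2*pi*\<bar>\<theta>\<bar> * real_of_int (M' - M))"
  proof (rule block_gen[OF True])
    fix y assume y: "y \<in> {M+1..M'}"
    have "norm (e (\<theta> * of_int M') - e (\<theta> * of_int y)) \<le> 2*pi*\<bar>\<theta> * of_int M' - \<theta> * of_int y\<bar>" by (rule e_lip)
    also have "\<bar>\<theta> * of_int M' - \<theta> * of_int y\<bar> = \<bar>\<theta>\<bar> * \<bar>of_int M' - of_int y\<bar>"
      by (simp add: abs_mult[symmetric] algebra_simps)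
    also have "\<bar>real_of_int M' - of_int y\<bar> \<le> real_of_int (M' - M)" using y by auto
    finally show "norm (e (\<theta> * of_int M') - e (\<theta> * of_int y)) \<le> 2*pi*\<bar>\<theta>\<bar> * real_of_int (M' - M)"
      by (simp add: mult_left_mono)
  qed
  thus ?thesis using sum_upto_block[OF True] by (simp add: power2_eq_square mult_ac)
next
  case False
  hence le: "M' \<le> M" by simp
  have "norm (of_int (M - M') * e (\<theta> * of_int M') - (\<Sum>y\<in>{M'+1..M}. e (\<theta> * of_int y)))
     \<le> real_of_int (M - M') * (2*pi*\<bar>\<theta>\<bar> * real_of_int (M - M'))"
  proof (rule block_gen[OF le])
    fix y assume y: "y \<in> {M'+1..M}"
    have "norm (e (\<theta> * of_int M') - e (\<theta> * of_int y)) \<le> 2*pi*\<bar>\<theta> * of_int M' - \<theta> * of_int y\<bar>" by (rule e_lip)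
    also have "\<bar>\<theta> * of_int M' - \<theta> * of_int y\<bar> = \<bar>\<theta>\<bar> * \<bar>of_int M' - of_int y\<bar>"
      by (simp add: abs_mult[symmetric] algebra_simps)
    also have "\<bar>real_of_int M' - of_int y\<bar> \<le> real_of_int (M - M')" using y by auto
    finally show "norm (e (\<theta> * of_int M') - e (\<theta> * of_int y)) \<le> 2*pi*\<bar>\<theta>\<bar> * real_of_int (M - M')"
      by (simp add: mult_left_mono)
  qed
  moreover have "of_int (M' - M) * e (\<theta> * of_int M') - (sum_upto (\<lambda>y. e (\<theta> * of_int y)) M' - sum_upto (\<lambda>y. e (\<theta> * of_int y)) M)
     = - (of_int (M - M') * e (\<theta> * of_int M') - (\<Sum>y\<in>{M'+1..M}. e (\<theta> * of_int y)))"
    using sum_upto_block[OF le, of "\<lambda>y. e (\<theta> * of_int y)"] by (simp add: algebra_simps)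
  ultimately have "norm (of_int (M' - M) * e (\<theta> * of_int M') - (sum_upto (\<lambda>y. e (\<theta> * of_int y)) M' - sum_upto (\<lambda>y. e (\<theta> * of_int y)) M))
     \<le> real_of_int (M - M') * (2*pi*\<bar>\<theta>\<bar> * real_of_int (M - M'))" by (metis norm_minus_cancel)
  moreover have "(real_of_int (M' - M))^2 = real_of_int (M - M') * real_of_int (M - M')"
    by (simp add: power2_eq_square algebra_simps)
  ultimately show ?thesis by (simp add: mult_ac)
qed

lemma sum_Suc_int: "(\<Sum>x\<in>{1..int (Suc n)}. F x) = F (int n + 1) + (\<Sum>x\<in>{1..int n}. F x)"
proof -
  have iv: "{1..int (Suc n)} = insert (int n + 1) {1..int n}" by auto
  show ?thesis unfolding iv by (subst sum.insert) auto
qed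

lemma main_err:
  fixes \<psi> :: "int \<Rightarrow> int" and \<theta> :: real
  assumes "\<psi> 0 = 0"
  shows "norm ((\<Sum>x\<in>{1..int N}. of_int (fdiff \<psi> (x - 1)) * e (\<theta> * of_int (\<psi> x)))
          - sum_upto (\<lambda>y. e (\<theta> * of_int y)) (\<psi> (int N)))
     \<le> 2*pi*\<bar>\<theta>\<bar> * (\<Sum>x\<in>{1..int N}. (real_of_int (fdiff \<psi> (x - 1)))^2)"
proof (induction N)
  case 0 thus ?case using assms by (simp add: sum_upto_def)
next
  case (Suc n)
  define f where "f = (\<lambda>y. e (\<theta> * of_int y))"
  have iv: "{1..int (Suc n)} = insert (int n + 1) {1..int n}" by auto
  let ?S = "(\<Sum>x\<in>{1..int n}. of_int (fdiff \<psi> (x - 1)) * e (\<theta> * of_int (\<psi> x)))"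
  have hs: "int (Suc n) = int n + 1" by simp
  have fd: "fdiff \<psi> (int n + 1 - 1) = \<psi> (int n + 1) - \<psi> (int n)" by (simp add: fdiff_def)
  have eq: "(\<Sum>x\<in>{1..int (Suc n)}. of_int (fdiff \<psi> (x - 1)) * e (\<theta> * of_int (\<psi> x))) - sum_upto f (\<psi> (int (Suc n)))
     = (?S - sum_upto f (\<psi> (int n))) + (of_int (\<psi> (int n + 1) - \<psi> (int n)) * e (\<theta> * of_int (\<psi> (int n + 1)))
        - (sum_upto f (\<psi> (int n + 1)) - sum_upto f (\<psi> (int n))))"
    unfolding sum_Suc_int fd unfolding hs by (simp add: of_int_diff left_diff_distrib)
  have "norm ((\<Sum>x\<in>{1..int (Suc n)}. of_int (fdiff \<psi> (x - 1)) * e (\<theta> * of_int (\<psi> x))) - sum_upto f (\<psi> (int (Suc n))))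
     \<le> norm (?S - sum_upto f (\<psi> (int n))) + norm (of_int (\<psi> (int n + 1) - \<psi> (int n)) * e (\<theta> * of_int (\<psi> (int n + 1)))
        - (sum_upto f (\<psi> (int n + 1)) - sum_upto f (\<psi> (int n))))"
    unfolding eq by (rule norm_triangle_ineq)
  also have "\<dots> \<le> 2*pi*\<bar>\<theta>\<bar> * (\<Sum>x\<in>{1..int n}. (real_of_int (fdiff \<psi> (x - 1)))^2)
      + 2*pi*\<bar>\<theta>\<bar> * (real_of_int (\<psi> (int n + 1) - \<psi> (int n)))^2"
    unfolding f_def by (rule add_mono[OF Suc.IH block_err])
  also have "\<dots> = 2*pi*\<bar>\<theta>\<bar> * (\<Sum>x\<in>{1..int (Suc n)}. (real_of_int (fdiff \<psi> (x - 1)))^2)"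
    unfolding sum_Suc_int fd by (simp only: distrib_left)
  finally show ?case unfolding f_def .
qed


lemma pow_diff_bound:
  fixes t X :: real
  assumes "0 \<le> t" "t + 1 \<le> X" "1 \<le> j"
  shows "0 \<le> (t+1)^j - t^j" "(t+1)^j - t^j \<le> real j * X^(j-1)"
proof -
  show "0 \<le> (t+1)^j - t^j" using assms by (simp add: power_mono)
  obtain m where m: "j = Suc m" using assms(3) by (cases j) auto
  have "(t+1)^Suc m - t^Suc m = (t + 1 - t) * (\<Sum>p<Suc m. (t+1)^p * t^(m-p))"
    by (rule diff_power_eq_sum)
  also have "\<dots> = (\<Sum>p<Suc m. (t+1)^p * t^(m-p))" by simp
  also have "\<dots> \<le> (\<Sum>p<Suc m. X^m)"
  proof (rule sum_mono)
    fix p assume p: "p \<in> {..<Suc m}"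
    have "(t+1)^p \<le> X^p" using assms by (intro power_mono) auto
    moreover have "t^(m-p) \<le> X^(m-p)" using assms by (intro power_mono) auto
    ultimately have "(t+1)^p * t^(m-p) \<le> X^p * X^(m-p)"
      using assms by (intro mult_mono) auto
    also have "\<dots> = X^m" using p by (simp add: power_add[symmetric])
    finally show "(t+1)^p * t^(m-p) \<le> X^m" .
  qed
  also have "\<dots> = real j * X^(j-1)" using m by simp
  finally show "(t+1)^j - t^j \<le> real j * X^(j-1)" using m by simp
qed

lemma G_up:
  fixes c :: "nat \<Rightarrow> real" and X t L :: real
  assumes d: "1 \<le> d" and cL: "\<And>j. j \<in> {1..d} \<Longrightarrow> \<bar>c j\<bar> \<le> L" and cd: "1 \<le> \<bar>c d\<bar>"
    and X: "1 \<le> X" "L \<le> X" and t: "0 \<le> t" "t + 1 \<le> X"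
  shows "\<bar>\<Sum>j=1..d. c j * ((t+1)^j - t^j)\<bar> \<le> real d ^ 2 * \<bar>c d\<bar> * X^(d-1)"
proof -
  have "\<bar>\<Sum>j=1..d. c j * ((t+1)^j - t^j)\<bar> \<le> (\<Sum>j=1..d. \<bar>c j * ((t+1)^j - t^j)\<bar>)"
    by (rule sum_abs)
  also have "\<dots> \<le> (\<Sum>j=1..d. real d * \<bar>c d\<bar> * X^(d-1))"
  proof (rule sum_mono)
    fix j assume j: "j \<in> {1..d}"
    have w0: "0 \<le> (t+1)^j - t^j" and w1: "(t+1)^j - t^j \<le> real j * X^(j-1)"
      using pow_diff_bound[OF t, of j] j by auto
    have "\<bar>c j * ((t+1)^j - t^j)\<bar> = \<bar>c j\<bar> * ((t+1)^j - t^j)" using w0 by (simp add: abs_mult)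
    also have "\<dots> \<le> \<bar>c j\<bar> * (real j * X^(j-1))" using w1 by (simp add: mult_left_mono)
    also have "\<dots> \<le> real d * \<bar>c d\<bar> * X^(d-1)"
    proof (cases "j = d")
      case True thus ?thesis by (simp add: mult_ac)
    next
      case False
      hence ed: "j \<le> d - 1" using j by auto
      have "\<bar>c j\<bar> * (real j * X^(j-1)) \<le> X * (real j * X^(j-1))"
        using cL[OF j] X by (intro mult_right_mono) auto
      also have "\<dots> = real j * X^j" using j by (cases j) auto
      also have "\<dots> \<le> real d * X^(d-1)"
        using ed j X by (intro mult_mono power_increasing) auto
      also have "\<dots> \<le> real d * \<bar>c d\<bar> * X^(d-1)"
        using mult_left_mono[OF cd, of "real d * X^(d-1)"] X by (simp add: mult_ac)
      finally show ?thesis .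
    qed
    finally show "\<bar>c j * ((t+1)^j - t^j)\<bar> \<le> real d * \<bar>c d\<bar> * X^(d-1)" .
  qed
  also have "\<dots> = real d ^ 2 * \<bar>c d\<bar> * X^(d-1)" by (simp add: power2_eq_square)
  finally show ?thesis .
qed

lemma geom_bound:
  fixes X :: real assumes "1 \<le> X"
  shows "(X - 1) * (\<Sum>j=1..m. X^j) \<le> X^(m+1)"
proof (induction m)
  case 0 thus ?case using assms by simp
next
  case (Suc m)
  have "(X - 1) * (\<Sum>j=1..Suc m. X^j) = (X-1)*(\<Sum>j=1..m. X^j) + (X-1)*X^(m+1)"
    by (simp add: distrib_left)
  also have "\<dots> \<le> X^(m+1) + (X-1)*X^(m+1)" using Suc by simp
  also have "\<dots> = X^(Suc m + 1)" by (simp add: algebra_simps)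
  finally show ?case .
qed

lemma split_top:
  fixes F :: "nat \<Rightarrow> real" assumes "1 \<le> d"
  shows "(\<Sum>j=1..d. F j) = F d + (\<Sum>j=1..d-1. F j)"
proof -
  have "{1..d} = insert d {1..d-1}" using assms by auto
  thus ?thesis using assms by simp
qed

lemma G_psi:
  fixes c :: "nat \<Rightarrow> real" and X L :: real
  assumes d: "1 \<le> d" and cL: "\<And>j. j \<in> {1..d} \<Longrightarrow> \<bar>c j\<bar> \<le> L" and cd: "1 \<le> \<bar>c d\<bar>"
    and X: "1 \<le> X" "L \<le> 3/5 * (X - 1)"
  shows "2/5 * \<bar>c d\<bar> * X^d \<le> \<bar>\<Sum>j=1..d. c j * X^j\<bar>"
proof -
  have L0: "0 \<le> L" using cL[of d] d by force
  have "\<bar>\<Sum>j=1..d-1. c j * X^j\<bar> \<le> (\<Sum>j=1..d-1. \<bar>c j * X^j\<bar>)" by (rule sum_abs)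
  also have "\<dots> \<le> (\<Sum>j=1..d-1. L * X^j)"
    using cL X by (intro sum_mono) (auto simp: abs_mult intro!: mult_right_mono)
  also have "\<dots> = L * (\<Sum>j=1..d-1. X^j)" by (simp add: sum_distrib_left)
  also have "\<dots> \<le> 3/5 * (X - 1) * (\<Sum>j=1..d-1. X^j)"
    using X by (intro mult_right_mono sum_nonneg) auto
  also have "\<dots> \<le> 3/5 * X^(d-1+1)"
    using mult_left_mono[OF geom_bound[OF X(1), of "d-1"], of "3/5"] by (simp only: mult.assoc)
  also have "\<dots> = 3/5 * X^d" using d by simp
  also have "\<dots> \<le> 3/5 * (\<bar>c d\<bar> * X^d)" using cd X by (simp add: mult_right_mono)
  finally have R: "\<bar>\<Sum>j=1..d-1. c j * X^j\<bar> \<le> 3/5 * (\<bar>c d\<bar> * X^d)" .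
  have "\<bar>c d * X^d\<bar> = \<bar>c d\<bar> * X^d" using X by (simp add: abs_mult)
  moreover have "(\<Sum>j=1..d. c j * X^j) = c d * X^d + (\<Sum>j=1..d-1. c j * X^j)" by (rule split_top[OF d])
  ultimately show ?thesis using R by linarith
qed

lemma w_grow:
  fixes X :: real assumes "0 \<le> X"
  shows "X * (\<Sum>j=1..m. (X+1)^j - X^j) \<le> (X+1)^(m+1) - X^(m+1)"
proof (induction m)
  case 0 thus ?case by simp
next
  case (Suc m)
  have "X * (\<Sum>j=1..Suc m. (X+1)^j - X^j) = X * (\<Sum>j=1..m. (X+1)^j - X^j) + X * ((X+1)^(m+1) - X^(m+1))"
    by (simp add: distrib_left)
  also have "\<dots> \<le> (X+1) * ((X+1)^(m+1) - X^(m+1))" using Suc by (simp add: algebra_simps)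
  also have "\<dots> \<le> (X+1)^(Suc m+1) - X^(Suc m+1)"
    using assms by (simp add: algebra_simps)
  finally show ?case .
qed

lemma G_dif:
  fixes c :: "nat \<Rightarrow> real" and X L :: real
  assumes d: "1 \<le> d" and cL: "\<And>j. j \<in> {1..d} \<Longrightarrow> \<bar>c j\<bar> \<le> L" and cd: "1 \<le> \<bar>c d\<bar>"
    and X: "1 \<le> X" "L \<le> X / 2"
  shows "1/2 * \<bar>c d\<bar> * X^(d-1) \<le> \<bar>\<Sum>j=1..d. c j * ((X+1)^j - X^j)\<bar>"
proof -
  define w where "w j = (X+1)^j - X^j" for j
  have w0: "0 \<le> w j" for j unfolding w_def using X by (simp add: power_mono)
  have "\<bar>\<Sum>j=1..d-1. c j * w j\<bar> \<le> (\<Sum>j=1..d-1. \<bar>c j * w j\<bar>)" by (rule sum_abs)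
  also have "\<dots> \<le> (\<Sum>j=1..d-1. L * w j)"
    using cL w0 by (intro sum_mono) (auto simp: abs_mult intro!: mult_right_mono)
  also have "\<dots> = L * (\<Sum>j=1..d-1. w j)" by (simp add: sum_distrib_left)
  also have "\<dots> \<le> X / 2 * (\<Sum>j=1..d-1. w j)"
    using X w0 by (intro mult_right_mono sum_nonneg) auto
  also have "\<dots> \<le> w d / 2" using w_grow[of X "d-1"] X d unfolding w_def by simp
  also have "\<dots> \<le> \<bar>c d\<bar> * w d / 2" using mult_right_mono[OF cd w0[of d]] by simp
  finally have R: "\<bar>\<Sum>j=1..d-1. c j * w j\<bar> \<le> \<bar>c d\<bar> * w d / 2" .
  have "\<bar>c d * w d\<bar> = \<bar>c d\<bar> * w d" using w0 by (simp add: abs_mult)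
  moreover have "(\<Sum>j=1..d. c j * w j) = c d * w d + (\<Sum>j=1..d-1. c j * w j)" by (rule split_top[OF d])
  ultimately have A: "\<bar>c d\<bar> * w d / 2 \<le> \<bar>\<Sum>j=1..d. c j * w j\<bar>" using R by linarith
  have "X^(d-1) \<le> w d"
  proof -
    have "(X+1)^d = (X+1) * (X+1)^(d-1)" using d by (cases d) auto
    also have "\<dots> \<ge> (X+1) * X^(d-1)" using X by (intro mult_left_mono power_mono) auto
    moreover have "X^d = X * X^(d-1)" using d by (cases d) auto
    ultimately show ?thesis unfolding w_def by (simp add: algebra_simps)
  qed
  hence "1/2 * \<bar>c d\<bar> * X^(d-1) \<le> \<bar>c d\<bar> * w d / 2" using cd by (simp add: mult_left_mono)
  thus ?thesis using A unfolding w_def by simp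
qed


lemma psi_reindex: "psi_poly k a x = (\<Sum>j=1..k. a (k+1-j) * x^j)"
  unfolding psi_poly_def by (rule sum.reindex_bij_witness[of _ "\<lambda>j. k+1-j" "\<lambda>j. k+1-j"]) auto

lemma ln_bounds:
  fixes X :: real assumes "3 \<le> X"
  shows "ln X \<le> X / 2" "ln X \<le> 3/5 * (X - 1)"
proof -
  have "ln (X/2) \<le> X/2 - 1" using assms by (intro ln_le_minus_one) auto
  moreover have "ln (X/2) = ln X - ln 2" using assms by (simp add: ln_div)
  ultimately have "ln X \<le> X/2 - 1 + 25/36" using ln2_le_25_over_36 by linarith
  moreover have "3/5 * (X - 1) = 3/5 * X - 3/5" by (simp add: right_diff_distrib)
  ultimately show "ln X \<le> X / 2" "ln X \<le> 3/5 * (X - 1)" using assms by linarith+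
qed

lemma KEY:
  fixes N :: nat and a :: "nat \<Rightarrow> int"
  assumes N1: "N \<ge> 1" and aL: "\<forall>i\<in>{1..k}. \<bar>real_of_int (a i)\<bar> \<le> ln (real N)"
  shows "(\<Sum>x\<in>{1..int N}. (real_of_int (fdiff (psi_poly k a) (x - 1)))^2)
     \<le> 5 * real k ^ 4 * \<bar>real_of_int (psi_poly k a (int N))\<bar> * \<bar>real_of_int (fdiff (psi_poly k a) (int N))\<bar>"
proof (cases "\<forall>j\<in>{1..k}. a (k+1-j) = 0")
  case True
  hence "psi_poly k a x = 0" for x unfolding psi_reindex by simp
  thus ?thesis by (simp add: fdiff_def)
next
  case False
  define D where "D = {j\<in>{1..k}. a (k+1-j) \<noteq> 0}"
  define d where "d = Max D"
  have Dfin: "finite D" and Dne: "D \<noteq> {}" using False unfolding D_def by auto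
  have dD: "d \<in> D" unfolding d_def using Dfin Dne by (rule Max_in)
  have dmax: "j \<in> D \<Longrightarrow> j \<le> d" for j unfolding d_def using Dfin by simp
  have d1: "1 \<le> d" and dk: "d \<le> k" and adz: "a (k+1-d) \<noteq> 0" using dD unfolding D_def by auto
  define c where "c j = real_of_int (a (k+1-j))" for j
  have psi_d: "psi_poly k a x = (\<Sum>j=1..d. a (k+1-j) * x^j)" for x
  proof -
    have "(\<Sum>j=1..d. a (k+1-j) * x^j) = (\<Sum>j=1..k. a (k+1-j) * x^j)"
    proof (rule sum.mono_neutral_left)
      show "\<forall>i\<in>{1..k} - {1..d}. a (k+1-i) * x^i = 0"
      proof
        fix i assume i: "i \<in> {1..k} - {1..d}"
        hence "i \<notin> D" using dmax by force
        thus "a (k+1-i) * x^i = 0" using i unfolding D_def by auto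
      qed
    qed (use dk in auto)
    thus ?thesis unfolding psi_reindex by simp
  qed
  have psi_r: "real_of_int (psi_poly k a x) = (\<Sum>j=1..d. c j * (real_of_int x)^j)" for x
    unfolding psi_d c_def by simp
  define L where "L = ln (real N)"
  define X where "X = real N"
  have cL: "\<bar>c j\<bar> \<le> L" if "j \<in> {1..d}" for j
  proof -
    have "k+1-j \<in> {1..k}" using that dk by auto
    thus ?thesis using aL unfolding c_def L_def by blast
  qed
  have cd: "1 \<le> \<bar>c d\<bar>" using adz unfolding c_def by linarith
  have X3: "3 \<le> X"
  proof (rule ccontr)
    assume "\<not> 3 \<le> X"
    hence "N < 3" unfolding X_def by simp
    hence "real N \<le> 2" by simp
    hence "ln (real N) \<le> ln 2" using N1 by (subst ln_le_cancel_iff) auto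
    hence "L < 1" using ln_2_less_1 unfolding L_def by linarith
    thus False using cL[of d] d1 cd by auto
  qed
  have L1: "L \<le> X/2" and L2: "L \<le> 3/5 * (X - 1)" using ln_bounds[OF X3] unfolding L_def X_def by auto
  define B where "B = real d ^ 2 * \<bar>c d\<bar> * X^(d-1)"
  have Dbound: "(real_of_int (fdiff (psi_poly k a) (x - 1)))^2 \<le> B^2" if x: "x \<in> {1..int N}" for x
  proof -
    define t where "t = real_of_int (x - 1)"
    have t: "0 \<le> t" "t + 1 \<le> X" using x unfolding t_def X_def by auto
    have eq: "real_of_int (fdiff (psi_poly k a) (x - 1)) = (\<Sum>j=1..d. c j * ((t+1)^j - t^j))"
      unfolding fdiff_def of_int_diff psi_r t_def by (simp add: sum_subtractf right_diff_distrib)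
    have "\<bar>\<Sum>j=1..d. c j * ((t+1)^j - t^j)\<bar> \<le> B"
      unfolding B_def by (rule G_up[of d c L X t, OF d1 cL cd]) (use X3 L1 t in auto)
    hence "\<bar>real_of_int (fdiff (psi_poly k a) (x - 1))\<bar> \<le> B" unfolding eq .
    thus ?thesis by (simp add: abs_le_square_iff[symmetric])
  qed
  have "(\<Sum>x\<in>{1..int N}. (real_of_int (fdiff (psi_poly k a) (x - 1)))^2) \<le> (\<Sum>x\<in>{1..int N}. B^2)"
    by (rule sum_mono) (rule Dbound)
  also have "\<dots> = X * B^2" unfolding X_def by simp
  finally have S: "(\<Sum>x\<in>{1..int N}. (real_of_int (fdiff (psi_poly k a) (x - 1)))^2) \<le> X * B^2" .
  have P1: "2/5 * \<bar>c d\<bar> * X^d \<le> \<bar>real_of_int (psi_poly k a (int N))\<bar>"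
  proof -
    have "2/5 * \<bar>c d\<bar> * X^d \<le> \<bar>\<Sum>j=1..d. c j * X^j\<bar>"
      by (rule G_psi[of d c L X, OF d1 cL cd]) (use X3 L2 in auto)
    thus ?thesis unfolding psi_r X_def by simp
  qed
  have P2: "1/2 * \<bar>c d\<bar> * X^(d-1) \<le> \<bar>real_of_int (fdiff (psi_poly k a) (int N))\<bar>"
  proof -
    have "real_of_int (fdiff (psi_poly k a) (int N)) = (\<Sum>j=1..d. c j * ((X+1)^j - X^j))"
      unfolding fdiff_def of_int_diff psi_r X_def by (simp add: sum_subtractf right_diff_distrib)
    moreover have "1/2 * \<bar>c d\<bar> * X^(d-1) \<le> \<bar>\<Sum>j=1..d. c j * ((X+1)^j - X^j)\<bar>"
      by (rule G_dif[of d c L X, OF d1 cL cd]) (use X3 L1 in auto)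
    ultimately show ?thesis by simp
  qed
  have Xd: "X^d = X * X^(d-1)" using d1 by (cases d) auto
  have "X * B^2 = 5 * real d ^ 4 * ((2/5 * \<bar>c d\<bar> * X^d) * (1/2 * \<bar>c d\<bar> * X^(d-1)))"
    unfolding B_def Xd by (simp add: power2_eq_square power4_eq_xxxx algebra_simps)
  also have "\<dots> \<le> 5 * real d ^ 4 * (\<bar>real_of_int (psi_poly k a (int N))\<bar> * \<bar>real_of_int (fdiff (psi_poly k a) (int N))\<bar>)"
    using P1 P2 X3 by (intro mult_left_mono mult_mono) auto
  also have "\<dots> \<le> 5 * real k ^ 4 * (\<bar>real_of_int (psi_poly k a (int N))\<bar> * \<bar>real_of_int (fdiff (psi_poly k a) (int N))\<bar>)"
    using dk by (intro mult_right_mono mult_left_mono power_mono) auto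
  finally show ?thesis using S by (simp add: mult_ac)
qed


theorem lemma2p3:
  fixes k :: nat
  shows "\<exists>C::real. \<forall>(N::nat) (a::nat \<Rightarrow> int) (\<theta>::real).
    N \<ge> 1 \<longrightarrow> (\<forall>i\<in>{1..k}. \<bar>real_of_int (a i)\<bar> \<le> ln (real N)) \<longrightarrow>
    norm ((\<Sum>x\<in>{1..int N}. of_int (fdiff (psi_poly k a) (x - 1)) * e (\<theta> * of_int (psi_poly k a x)))
          - sum_upto (\<lambda>y. e (\<theta> * of_int y)) (psi_poly k a (int N)))
      \<le> C * \<bar>\<theta>\<bar> * \<bar>real_of_int (psi_poly k a (int N))\<bar> * \<bar>real_of_int (fdiff (psi_poly k a) (int N))\<bar>"
proof (rule exI[of _ "10 * pi * real k ^ 4"], intro allI impI)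
  fix N :: nat and a :: "nat \<Rightarrow> int" and \<theta> :: real
  assume N1: "N \<ge> 1" and aL: "\<forall>i\<in>{1..k}. \<bar>real_of_int (a i)\<bar> \<le> ln (real N)"
  have p0: "psi_poly k a 0 = 0" unfolding psi_poly_def by (intro sum.neutral) auto
  have E: "norm ((\<Sum>x\<in>{1..int N}. of_int (fdiff (psi_poly k a) (x - 1)) * e (\<theta> * of_int (psi_poly k a x)))
          - sum_upto (\<lambda>y. e (\<theta> * of_int y)) (psi_poly k a (int N)))
     \<le> 2*pi*\<bar>\<theta>\<bar> * (\<Sum>x\<in>{1..int N}. (real_of_int (fdiff (psi_poly k a) (x - 1)))^2)"
    by (rule main_err[of "psi_poly k a", OF p0])
  also have "\<dots> \<le> 2*pi*\<bar>\<theta>\<bar> * (5 * real k ^ 4 * \<bar>real_of_int (psi_poly k a (int N))\<bar> * \<bar>real_of_int (fdiff (psi_poly k a) (int N))\<bar>)"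
    by (rule mult_left_mono[OF KEY[OF N1 aL]]) simp
  also have "\<dots> = 10 * pi * real k ^ 4 * \<bar>\<theta>\<bar> * \<bar>real_of_int (psi_poly k a (int N))\<bar> * \<bar>real_of_int (fdiff (psi_poly k a) (int N))\<bar>"
    by (simp add: mult_ac)
  finally show "norm ((\<Sum>x\<in>{1..int N}. of_int (fdiff (psi_poly k a) (x - 1)) * e (\<theta> * of_int (psi_poly k a x)))
          - sum_upto (\<lambda>y. e (\<theta> * of_int y)) (psi_poly k a (int N)))
      \<le> 10 * pi * real k ^ 4 * \<bar>\<theta>\<bar> * \<bar>real_of_int (psi_poly k a (int N))\<bar> * \<bar>real_of_int (fdiff (psi_poly k a) (int N))\<bar>" .
qed

end
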